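(* Let $X,Y$ be Banach spaces, $C\colon X\to Y$ a bounded linear operator, $(S_t)_{t\ge0}$ a semigroup of bounded linear operators on $X$ (i.e. $S_0=\mathrm{Id}$, $S_{t+s}=S_tS_s$), and $M\ge1$, $\omega\in\mathbb{R}$ with $\|S_t\|\le Me^{\omega t}$ for all $t\ge0$. Assume that for every $x\in X$ the map $t\mapsto\|CS_tx\|_Y$ is measurable. Let $\lambda^*\ge0$, $(P_\lambda)_{\lambda>\lambda^*}$ a family of bounded linear operators on $X$, $r\in[1,\infty]$, $d_0,d_1,d_3,\gamma_1,\gamma_2,\gamma_3,T>0$ with $\gamma_1<\gamma_2$, and $d_2\ge1$, and assume \[ \|P_\lambda x\|_X\le d_0e^{d_1\lambda^{\gamma_1}}\|CP_\lambda x\|_Y\quad\text{for all }x\in X,\ \lambda>\lambda^*, \] and \[ \|(\mathrm{Id}-P_\lambda)S_tx\|_X\le d_2e^{-d_3\lambda^{\gamma_2}t^{\gamma_3}}\|x\|_X\quad\text{for all }x\in X,\ \lambda>\lambda^*,\ t\in(0,T/2]. \] Then for all $x\in X$, \[ \|S_Tx\|_X\le C_{\mathrm{obs}}\Big(\int_0^T\|CS_tx\|_Y^r\,\mathrm{d}t\Big)^{1/r}\ \text{if }r\in[1,\infty),\qquad \|S_Tx\|_X\le C_{\mathrm{obs}}\operatorname*{ess\,sup}_{t\in[0,T]}\|CS_tx\|_Y\ \text{if }r=\infty, \] with \[ C_{\mathrm{obs}}=\frac{C_1}{T^{1/r}}\exp\Big(\frac{C_2}{T^{\gamma_1\gamma_3/(\gamma_2-\gamma_1)}}+C_3T\Big),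 \] where $T^{1/r}:=1$ if $r=\infty$, and \[ C_1=(4Md_0)\max\Big\{\big(4d_2M^2(d_0\|C\|+1)\big)^{8/(e\ln2)},\ e^{4d_1(2\lambda^* )^{\gamma_1}}\Big\}, \] \[ C_2=4\Big(2^{\gamma_1}(2\cdot4^{\gamma_3})^{\frac{\gamma_1\gamma_2}{\gamma_2-\gamma_1}}d_1^{\gamma_2}/d_3^{\gamma_1}\Big)^{\frac{1}{\gamma_2-\gamma_1}},\qquad C_3=\max\{\omega,0\}\big(1+10/(e\ln2)\big). \]
   Context: No strong continuity of the semigroup is assumed. *)

theory Defs
  imports "HOL-Analysis.Analysis" "HOL-Probability.Essential_Supremum"
begin

end

theory Submission
  imports Defs
begin
lemma iden_alg:
  fixes g1 g2 nu g3 p q r e u v :: real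
  assumes "g1 \<noteq> 0" "nu \<noteq> 0" "g2 = g1 + nu"
  shows "(r + g2 * ((1/g1) * (e - q)) + g3 * v) - (2*p + (g1*g3/nu) * p + e)
     = (nu/g1) * (e - ((1/nu) * (g1 * p + (g1*g2/nu) * (p + g3 * (2*p)) + g2 * q - g1 * r) - (g1*g3/nu) * u))
       + g3 * (v - u + 2*p) + (g1/nu) * p + (g1*g3/nu) * p"
  unfolding assms(3) using assms(1,2) by (simp add: field_simps)

lemma key_decay:
  fixes d1 d3 g1 g2 g3 s t E X :: real
  assumes d1: "d1>0" and d3: "d3>0" and g1: "g1>0" and g12: "g1<g2" and g3: "g3>0"
    and s: "s>0" and ts: "t \<ge> s/4" and E: "E>0"
    and X_def: "X = (2 powr g1 * (2 * 4 powr g3) powr (g1*g2/(g2-g1)) * d1 powr g2 / d3 powr g1) powr (1/(g2-g1))"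
    and EX: "E \<ge> X * s powr (-(g1*g3/(g2-g1)))"
  shows "4 * 2 powr (g1*g3/(g2-g1)) * E \<le> d3 * ((E/d1) powr (1/g1)) powr g2 * t powr g3"
proof -
  define nu where "nu = g2 - g1"
  have nu: "nu > 0" using g12 nu_def by simp
  define b where "b = g1*g3/nu"
  have b: "b \<ge> 0" using g1 g3 nu b_def by simp
  have t: "t > 0" using ts s by simp
  define Y where "Y = 2 powr g1 * (2 * 4 powr g3) powr (g1*g2/nu) * d1 powr g2 / d3 powr g1"
  have Ypos: "Y > 0" unfolding Y_def using d1 d3 by simp
  have XY: "X = Y powr (1/nu)" unfolding X_def Y_def nu_def ..
  have Xpos: "X > 0" unfolding XY using Ypos by simp
  have l4: "ln (4::real) = 2 * ln 2"
  proof -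
    have "(4::real) = 2 * 2" by simp
    hence "ln (4::real) = ln 2 + ln 2" by (simp only: ln_mult) (simp add: ln_mult)
    thus ?thesis by simp
  qed
  have lZ: "ln (2 * 4 powr g3 :: real) = ln 2 + g3 * (2 * ln 2)"
    by (simp add: ln_mult l4)
  have lY: "ln Y = g1 * ln 2 + (g1*g2/nu) * (ln 2 + g3 * (2 * ln 2)) + g2 * ln d1 - g1 * ln d3"
  proof -
    have "ln Y = ln (2 powr g1) + ln ((2 * 4 powr g3) powr (g1*g2/nu)) + ln (d1 powr g2) - ln (d3 powr g1)"
      unfolding Y_def using d1 d3 by (simp add: ln_mult ln_div del: ln_powr)
    thus ?thesis using lZ by simp
  qed
  have lX: "ln X = (1/nu) * ln Y" unfolding XY by simp
  have hE: "ln E \<ge> ln X - b * ln s"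
  proof -
    have "ln (X * s powr (-b)) \<le> ln E" using EX Xpos s E b_def nu_def by (subst ln_le_cancel_iff) auto
    thus ?thesis using Xpos s by (simp add: ln_mult)
  qed
  have ht: "ln t \<ge> ln s - 2 * ln 2"
  proof -
    have "ln (s/4) \<le> ln t" using ts s t by (subst ln_le_cancel_iff) auto
    thus ?thesis using s l4 by (simp add: ln_div)
  qed
  have lL: "ln (4 * 2 powr b * E) = 2 * ln 2 + b * ln 2 + ln E" using E l4 by (simp add: ln_mult)
  have lR: "ln (d3 * ((E/d1) powr (1/g1)) powr g2 * t powr g3) = ln d3 + g2 * ((1/g1) * (ln E - ln d1)) + g3 * ln t"
    using E d1 d3 t by (simp add: ln_mult ln_div)
  define e0 where "e0 = ln X - b * ln s"
  have iden: "(ln d3 + g2 * ((1/g1) * (ln E - ln d1)) + g3 * ln t) - (2 * ln 2 + b * ln 2 + ln E)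
     = (nu/g1) * (ln E - e0) + g3 * (ln t - ln s + 2 * ln 2) + (g1/nu) * ln 2 + b * ln 2"
    unfolding e0_def lX lY b_def
    by (rule iden_alg) (use g1 nu nu_def in auto)
  have "0 \<le> (nu/g1) * (ln E - e0)" using hE e0_def nu g1 by simp
  moreover have "0 \<le> g3 * (ln t - ln s + 2 * ln 2)" using ht g3 by simp
  moreover have "0 \<le> (g1/nu) * ln 2 + b * ln 2" using g1 nu b by simp
  ultimately have "ln (4 * 2 powr b * E) \<le> ln (d3 * ((E/d1) powr (1/g1)) powr g2 * t powr g3)"
    using iden lL lR by linarith
  hence "4 * 2 powr b * E \<le> d3 * ((E/d1) powr (1/g1)) powr g2 * t powr g3"
    using E d1 d3 t by (subst (asm) ln_le_cancel_iff) auto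
  thus ?thesis unfolding b_def nu_def .
qed

lemma telescope:
  fixes f al B :: "nat \<Rightarrow> real" and Psi :: real
  assumes rec: "\<And>k. f k \<le> al k * Psi + B k * f (Suc k)" and Bnn: "\<And>k. B k \<ge> 0"
  shows "f 0 \<le> (\<Sum>k\<le>N. (\<Prod>j<k. B j) * al k) * Psi + (\<Prod>j\<le>N. B j) * f (Suc N)"
proof (induction N)
  case 0
  then show ?case using rec[of 0] by simp
next
  case (Suc N)
  have pn: "(\<Prod>j\<le>N. B j) \<ge> 0" using Bnn by (simp add: prod_nonneg)
  have "(\<Prod>j\<le>N. B j) * f (Suc N) \<le> (\<Prod>j\<le>N. B j) * (al (Suc N) * Psi + B (Suc N) * f (Suc (Suc N)))"
    using rec[of "Suc N"] pn by (rule mult_left_mono)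
  moreover have "(\<Prod>j<Suc N. B j) = (\<Prod>j\<le>N. B j)" using lessThan_Suc_atMost by simp
  ultimately show ?case using Suc.IH
    by (simp add: algebra_simps)
qed

lemma core:
  fixes C :: "'a::banach \<Rightarrow>\<^sub>L 'b::banach"
    and S :: "real \<Rightarrow> ('a \<Rightarrow>\<^sub>L 'a)"
    and P :: "real \<Rightarrow> ('a \<Rightarrow>\<^sub>L 'a)"
    and M \<omega> lamS d0 d1 d2 d3 g1 g2 g3 T \<Psi> :: real and x :: 'a
  assumes Sadd: "\<And>t s. t \<ge> 0 \<Longrightarrow> s \<ge> 0 \<Longrightarrow> S (t + s) = S t o\<^sub>L S s"
    and M: "M \<ge> 1"
    and Sbound: "\<And>t. t \<ge> 0 \<Longrightarrow> norm (S t) \<le> M * exp (\<omega> * t)"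
    and lam: "lamS \<ge> 0"
    and d0: "d0 > 0" and d1: "d1 > 0" and d3: "d3 > 0" and g1: "g1 > 0" and g2: "g2 > 0"
    and g3: "g3 > 0" and T: "T > 0"
    and g12: "g1 < g2"
    and d2: "d2 \<ge> 1"
    and obs: "\<And>x l. l > lamS \<Longrightarrow>
               norm (P l x) \<le> d0 * exp (d1 * l powr g1) * norm (C (P l x))"
    and diss: "\<And>x l t. l > lamS \<Longrightarrow> t \<in> {0<..T/2} \<Longrightarrow>
               norm (S t x - P l (S t x)) \<le> d2 * exp (- d3 * l powr g2 * t powr g3) * norm x"
    and Psi: "\<Psi> \<ge> 0"
    and H: "\<And>k c. (\<And>s. s \<in> {3*T/2^(k+2)..T/2^k} \<Longrightarrow> c \<le> norm (C (S s x))) \<Longrightarrow> c \<le> 2^(k+2) * \<Psi>"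
  shows "norm (S T x) \<le> ((4 * M * d0) * max ((4 * d2 * M\<^sup>2 * (d0 * norm C + 1)) powr (8 / (exp 1 * ln 2)))
                                      (exp (4 * d1 * (2 * lamS) powr g1)))
      * exp (4 * (2 powr g1 * (2 * 4 powr g3) powr (g1 * g2 / (g2 - g1))
                        * d1 powr g2 / d3 powr g1) powr (1 / (g2 - g1)) / T powr (g1 * g3 / (g2 - g1))
             + max \<omega> 0 * (1 + 10 / (exp 1 * ln 2)) * T) * \<Psi>"
proof -
  define K where "K = d2 * (d0 * norm C + 1)"
  define MK where "MK = M * K"
  define wp where "wp = max \<omega> 0"
  define sig where "sig = ln (8 * MK)"
  define L where "L = d1 * (2 * lamS) powr g1"
  define X where "X = (2 powr g1 * (2 * 4 powr g3) powr (g1 * g2 / (g2 - g1))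
                        * d1 powr g2 / d3 powr g1) powr (1 / (g2 - g1))"
  define b where "b = g1*g3/(g2-g1)"
  define E where "E k = max (X * (T/2^k) powr (-b)) (max sig L)" for k :: nat
  define lm where "lm k = (E k / d1) powr (1/g1)" for k
  define f where "f k = norm (S (T/2^k) x)" for k :: nat
  define A where "A k = M * exp (wp * (T/2^(k+2))) * d0 * exp (E k)" for k :: nat
  define rho where "rho k = MK * exp ((1 - 4 * 2 powr b) * E k)" for k
  define B where "B k = exp (wp * (T/2^(k+2))) * rho k" for k :: nat
  have K1: "K \<ge> 1"
  proof -
    have "d0 * norm C + 1 \<ge> 1" using d0 by simp
    thus ?thesis unfolding K_def using mult_mono[of 1 d2 1 "d0 * norm C + 1"] d2 by simp
  qed
  have MK1: "MK \<ge> 1" unfolding MK_def using mult_mono[of 1 M 1 K] K1 M by simp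
  have sig: "sig > 0" unfolding sig_def using MK1 by simp
  have Xpos: "X > 0" unfolding X_def using d1 d3 by simp
  have b0: "b > 0" unfolding b_def using g1 g3 g12 by simp
  have b1: "2 powr b \<ge> 1" using b0 ge_one_powr_ge_zero[of 2 b] by simp
  have wp0: "wp \<ge> 0" unfolding wp_def by simp
  have L0: "L \<ge> 0" unfolding L_def using d1 by simp
  have EgeS: "E k \<ge> sig" and EgeL: "E k \<ge> L" and EgeX: "E k \<ge> X * (T/2^k) powr (-b)" for k
    unfolding E_def by auto
  have Epos: "E k > 0" for k using EgeS[of k] sig by linarith
  have Erat: "E (Suc k) \<le> 2 powr b * E k" for k
  proof -
    have eq: "(T/2^(Suc k)) powr (-b) = (T/2^k) powr (-b) * 2 powr b"
      using T by (simp add: powr_divide powr_minus_divide powr_mult)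
    have "X * (T/2^(Suc k)) powr (-b) = 2 powr b * (X * (T/2^k) powr (-b))"
      unfolding eq by (simp only: mult_ac)
    also have "\<dots> \<le> 2 powr b * E k"
      using EgeX[of k] by (intro mult_left_mono) auto
    finally have "X * (T/2^(Suc k)) powr (-b) \<le> 2 powr b * E k" .
    moreover have "max sig L \<le> 2 powr b * E k"
      using EgeS[of k] EgeL[of k] b1 sig L0
      using mult_right_mono[of 1 "2 powr b" "E k"] Epos[of k] unfolding E_def by auto
    ultimately show ?thesis unfolding E_def[of "Suc k"] by simp
  qed
  have lm_E: "d1 * lm k powr g1 = E k" for k
  proof -
    have "lm k powr g1 = E k / d1" unfolding lm_def using g1 Epos[of k] d1 by (simp add: powr_powr)
    thus ?thesis using d1 by simp
  qed
  have lm_gt: "lm k > lamS" for k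
  proof -
    have "(2*lamS) powr g1 \<le> E k / d1" using EgeL[of k] d1 unfolding L_def by (simp add: field_simps)
    hence "((2*lamS) powr g1) powr (1/g1) \<le> lm k" unfolding lm_def using g1 by (intro powr_mono2) auto
    hence "2*lamS \<le> lm k" using g1 lam by (simp add: powr_powr)
    moreover have "lm k > 0" unfolding lm_def using Epos[of k] d1 by simp
    ultimately show ?thesis using lam by linarith
  qed
  have decay: "4 * 2 powr b * E k \<le> d3 * lm k powr g2 * t powr g3" if "t \<ge> T/2^(k+2)" for k t
  proof -
    have s: "T/2^k > 0" using T by simp
    have eq: "(T/2^k)/4 = T/2^(k+2)" by (simp add: power_add)
    have ts: "t \<ge> (T/2^k)/4" using that eq by linarith
    show ?thesis unfolding lm_def b_def
      by (rule key_decay[OF d1 d3 g1 g12 g3 s ts Epos[of k] X_def EgeX[of k, unfolded b_def]])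
  qed
  have tau_pos: "T/2^(k+2) > 0" for k :: nat using T by simp
  have qge: "2 powr b * E k \<ge> E k" for k using mult_right_mono[of 1 "2 powr b" "E k"] b1 Epos[of k] by simp
  have step: "f k \<le> A k * norm (C (S s x)) + B k * f (Suc k)"
    if s: "s \<in> {3*T/2^(k+2)..T/2^k}" for k s
  proof -
    define tau where "tau = T/2^(k+2)"
    define a where "a = T/2^(k+1)"
    define bb where "bb = T/2^k"
    have tau: "tau > 0" unfolding tau_def using T by simp
    have a2: "a = 2*tau" unfolding a_def tau_def by (simp add: power_add)
    have b4: "bb = 4*tau" unfolding bb_def tau_def by (simp add: power_add)
    have sI: "3*tau \<le> s" "s \<le> bb" using s unfolding tau_def bb_def by auto
    define t where "t = s - a"
    have t1: "tau \<le> t" and t2: "t \<le> 2*tau" using sI a2 b4 t_def by auto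
    have "(4::real) \<le> 2^(k+2)" by (simp add: power_add)
    hence "tau \<le> T/4" unfolding tau_def using T by (intro divide_left_mono) auto
    hence tT: "t \<le> T/2" using t2 by linarith
    have t0: "t > 0" using t1 tau by linarith
    have a0: "a \<ge> 0" using a2 tau by simp
    have bs: "bb - s \<ge> 0" "bb - s \<le> tau" using sI b4 by auto
    have s0: "s \<ge> 0" using sI tau by simp
    have Ss: "S s = S t o\<^sub>L S a" using Sadd[of t a] t0 a0 unfolding t_def by simp
    have Sb: "S bb = S (bb - s) o\<^sub>L S s" using Sadd[of "bb - s" s] bs s0 by simp
    define y where "y = S a x"
    define z where "z = S t y"
    define l where "l = lm k"
    have zs: "S s x = z" unfolding z_def y_def Ss by simp
    have fk: "f k = norm (S (bb - s) z)" unfolding f_def bb_def[symmetric] Sb zs[symmetric] by simp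
    have fSk: "f (Suc k) = norm y" unfolding f_def y_def a_def by simp
    have n1: "f k \<le> M * exp (wp * tau) * norm z"
    proof -
      have "norm (S (bb - s) z) \<le> norm (S (bb - s)) * norm z" by (rule norm_blinfun)
      also have "\<dots> \<le> M * exp (wp * tau) * norm z"
      proof (rule mult_right_mono)
        have "\<omega> * (bb - s) \<le> wp * (bb - s)" using bs unfolding wp_def by (intro mult_right_mono) auto
        also have "\<dots> \<le> wp * tau" using bs wp0 by (intro mult_left_mono) auto
        finally have "exp (\<omega> * (bb - s)) \<le> exp (wp * tau)" by simp
        hence "M * exp (\<omega> * (bb - s)) \<le> M * exp (wp * tau)" using M by simp
        thus "norm (S (bb - s)) \<le> M * exp (wp * tau)" using Sbound[OF bs(1)] by linarith
      qed simp
      finally show ?thesis using fk by simp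
    qed
    have lgt: "l > lamS" unfolding l_def by (rule lm_gt)
    define D where "D = norm (z - P l z)"
    have D0: "D \<ge> 0" unfolding D_def by simp
    have D: "D \<le> d2 * exp (- d3 * l powr g2 * t powr g3) * norm y"
      unfolding D_def z_def using diss[OF lgt, of t y] t0 tT by simp
    have "4 * 2 powr b * E k \<le> d3 * l powr g2 * t powr g3" unfolding l_def
      using decay[of k t] t1 tau_def by simp
    hence ex: "exp (- d3 * l powr g2 * t powr g3) \<le> exp ((- 4 * 2 powr b) * E k)" by simp
    have "d2 * exp (- d3 * l powr g2 * t powr g3) * norm y \<le> d2 * exp ((- 4 * 2 powr b) * E k) * norm y"
      using ex d2 by (intro mult_right_mono mult_left_mono) auto
    hence D2: "D \<le> d2 * exp ((- 4 * 2 powr b) * E k) * norm y" using D by linarith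
    have Pz: "norm (P l z) \<le> d0 * exp (E k) * norm (C (P l z))" using obs[OF lgt, of z] lm_E[of k] l_def by simp
    have CPz: "norm (C (P l z)) \<le> norm (C z) + norm C * D"
    proof -
      have "C (P l z) = C z - C (z - P l z)" by (simp add: blinfun.diff_right)
      hence "norm (C (P l z)) \<le> norm (C z) + norm (C (z - P l z))" by (metis norm_triangle_ineq4)
      also have "norm (C (z - P l z)) \<le> norm C * D" unfolding D_def by (rule norm_blinfun)
      finally show ?thesis by simp
    qed
    have nz: "norm z \<le> norm (P l z) + D"
      unfolding D_def using norm_triangle_ineq[of "P l z" "z - P l z"] by simp
    have eE: "exp (E k) \<ge> 1" using Epos[of k] by simp
    have nz2: "norm z \<le> d0 * exp (E k) * norm (C z) + (d0 * norm C + 1) * exp (E k) * D"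
    proof -
      have "d0 * exp (E k) * norm (C (P l z)) \<le> d0 * exp (E k) * (norm (C z) + norm C * D)"
        using CPz d0 by (intro mult_left_mono) auto
      hence "norm z \<le> d0 * exp (E k) * (norm (C z) + norm C * D) + D" using nz Pz by linarith
      also have "\<dots> = d0 * exp (E k) * norm (C z) + (d0 * exp (E k) * norm C + 1) * D"
        by (simp add: algebra_simps)
      also have "\<dots> \<le> d0 * exp (E k) * norm (C z) + (d0 * norm C + 1) * exp (E k) * D"
      proof -
        have "d0 * exp (E k) * norm C + 1 \<le> (d0 * norm C + 1) * exp (E k)"
          using eE by (simp add: algebra_simps)
        thus ?thesis using D0 by (simp add: mult_right_mono)
      qed
      finally show ?thesis .
    qed
    have nz3: "norm z \<le> d0 * exp (E k) * norm (C z) + K * exp ((1 - 4 * 2 powr b) * E k) * norm y"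
    proof -
      have "(d0 * norm C + 1) * exp (E k) * D \<le> (d0 * norm C + 1) * exp (E k) * (d2 * exp ((- 4 * 2 powr b) * E k) * norm y)"
        using D2 d0 by (intro mult_left_mono) auto
      also have "\<dots> = K * exp ((1 - 4 * 2 powr b) * E k) * norm y"
        unfolding K_def by (simp add: algebra_simps mult_exp_exp)
      finally show ?thesis using nz2 by linarith
    qed
    have "M * exp (wp * tau) * norm z \<le> M * exp (wp * tau) * (d0 * exp (E k) * norm (C z) + K * exp ((1 - 4 * 2 powr b) * E k) * norm y)"
      using nz3 M by (intro mult_left_mono) auto
    also have "\<dots> = A k * norm (C (S s x)) + B k * f (Suc k)"
      unfolding A_def B_def rho_def MK_def fSk zs tau_def by (simp add: algebra_simps)
    finally show ?thesis using n1 by linarith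
  qed
  have Apos: "A k > 0" for k unfolding A_def using M d0 by simp
  have rho_nn: "rho k \<ge> 0" for k unfolding rho_def using MK1 by simp
  have Bnn: "B k \<ge> 0" for k unfolding B_def using rho_nn[of k] by simp
  have rec: "f k \<le> (A k * 2^(k+2)) * \<Psi> + B k * f (Suc k)" for k
  proof -
    have "(f k - B k * f (Suc k)) / A k \<le> 2^(k+2) * \<Psi>"
    proof (rule H)
      fix s assume "s \<in> {3*T/2^(k+2)..T/2^k}"
      from step[OF this] show "(f k - B k * f (Suc k)) / A k \<le> norm (C (S s x))"
        using Apos[of k] by (simp add: pos_divide_le_eq algebra_simps)
    qed
    thus ?thesis using Apos[of k] by (simp add: pos_divide_le_eq algebra_simps)
  qed
  have esig: "exp (- sig) = 1 / (8 * MK)" unfolding sig_def using MK1 by (simp add: exp_minus inverse_eq_divide)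
  have rho8: "rho k \<le> 1/8" for k
  proof -
    have "(1 - 4 * 2 powr b) * E k = E k - 4 * (2 powr b * E k)" by (simp add: algebra_simps)
    hence "(1 - 4 * 2 powr b) * E k \<le> - sig" using qge[of k] EgeS[of k] sig by linarith
    hence "exp ((1 - 4 * 2 powr b) * E k) \<le> 1 / (8 * MK)" unfolding esig[symmetric] by simp
    hence "rho k \<le> MK * (1 / (8 * MK))" unfolding rho_def using MK1 by (intro mult_left_mono) auto
    thus ?thesis using MK1 by simp
  qed
  have rhoE: "rho m * exp (E (Suc m)) \<le> 1/8" for m
  proof -
    have "(1 - 4 * 2 powr b) * E m = E m - 4 * (2 powr b * E m)" by (simp add: algebra_simps)
    hence "(1 - 4 * 2 powr b) * E m + E (Suc m) \<le> - sig" using qge[of m] EgeS[of m] sig Erat[of m] by linarith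
    hence "exp ((1 - 4 * 2 powr b) * E m + E (Suc m)) \<le> 1 / (8 * MK)" unfolding esig[symmetric] by simp
    hence "MK * exp ((1 - 4 * 2 powr b) * E m + E (Suc m)) \<le> MK * (1 / (8 * MK))" using MK1 by (intro mult_left_mono) auto
    thus ?thesis unfolding rho_def using MK1 by (simp add: exp_add)
  qed
  have prodrho: "(\<Prod>j<k. rho j) \<le> (1/8)^k" for k
  proof (induction k)
    case (Suc k)
    have "(\<Prod>j<Suc k. rho j) = (\<Prod>j<k. rho j) * rho k" by simp
    also have "\<dots> \<le> (1/8)^k * (1/8)" using Suc.IH rho8[of k] rho_nn by (intro mult_mono) (auto simp: prod_nonneg)
    finally show ?case by simp
  qed simp
  have prodB: "(\<Prod>j<k. B j) \<le> exp (wp * (T/2 - T/2^(k+1))) * (\<Prod>j<k. rho j)" for k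
  proof (induction k)
    case 0 then show ?case by simp
  next
    case (Suc k)
    have "(\<Prod>j<Suc k. B j) = (\<Prod>j<k. B j) * B k" by simp
    also have "\<dots> \<le> (exp (wp * (T/2 - T/2^(k+1))) * (\<Prod>j<k. rho j)) * B k"
      using Suc.IH Bnn[of k] by (rule mult_right_mono)
    also have "\<dots> = exp (wp * (T/2 - T/2^(k+1))) * exp (wp * (T/2^(k+2))) * (\<Prod>j<Suc k. rho j)"
      unfolding B_def by (simp add: algebra_simps)
    also have "\<dots> = exp (wp * (T/2 - T/2^(Suc k+1))) * (\<Prod>j<Suc k. rho j)"
    proof -
      have ex: "wp * (T/2 - T/2^(k+1)) + wp * (T/2^(k+2)) = wp * (T/2 - T/2^(Suc k+1))"
        by (simp add: field_simps power_add)
      show ?thesis unfolding ex[symmetric] mult_exp_exp by simp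
    qed
    finally show ?case .
  qed
  define c0 where "c0 = exp (wp*T/2) * (M*d0)"
  have c0: "c0 > 0" unfolding c0_def using M d0 by simp
  have g0: "(\<Prod>j<0. B j) * (A 0 * 2^(0+2)) \<le> c0 * (4 * exp (E 0))"
  proof -
    have "wp * (T/4) \<le> wp*T/2" using wp0 T by (simp add: mult_left_mono)
    hence "exp (wp * (T/4)) \<le> exp (wp*T/2)" by simp
    hence "M * d0 * exp (E 0) * 4 * exp (wp * (T/4)) \<le> M * d0 * exp (E 0) * 4 * exp (wp*T/2)"
      using M d0 by (intro mult_left_mono) auto
    thus ?thesis unfolding A_def c0_def by (simp add: algebra_simps)
  qed
  have gS: "(\<Prod>j<Suc m. B j) * (A (Suc m) * 2^(Suc m + 2)) \<le> c0 * (1/4)^m" for m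
  proof -
    have P1: "(\<Prod>j<Suc m. B j) \<le> exp (wp * (T/2 - T/2^(m+2))) * ((\<Prod>j<m. rho j) * rho m)"
      using prodB[of "Suc m"] by simp
    have "(\<Prod>j<Suc m. B j) * (A (Suc m) * 2^(Suc m + 2))
        \<le> exp (wp * (T/2 - T/2^(m+2))) * ((\<Prod>j<m. rho j) * rho m) * (A (Suc m) * 2^(Suc m + 2))"
      using P1 Apos[of "Suc m"] by (intro mult_right_mono) auto
    also have "\<dots> = (exp (wp * (T/2 - T/2^(m+2))) * exp (wp * (T/2^(m+3)))) * (M * d0) * (\<Prod>j<m. rho j) * (rho m * exp (E (Suc m))) * 2^(m+3)"
      unfolding A_def by (simp add: algebra_simps power_add)
    also have "\<dots> \<le> exp (wp*T/2) * (M * d0) * (1/8)^m * (1/8) * 2^(m+3)"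
    proof -
      have "wp * (T/2 - T/2^(m+2)) + wp * (T/2^(m+3)) \<le> wp * T/2"
      proof -
        have "T/2 - T/2^(m+2) + T/2^(m+3) \<le> T/2" using T by (simp add: power_add)
        thus ?thesis using wp0 by (metis distrib_left mult_left_mono times_divide_eq_right)
      qed
      hence e1: "exp (wp * (T/2 - T/2^(m+2))) * exp (wp * (T/2^(m+3))) \<le> exp (wp*T/2)"
        by (simp add: mult_exp_exp)
      have pr: "0 \<le> (\<Prod>j<m. rho j)" using rho_nn by (simp add: prod_nonneg)
      have r2: "0 \<le> rho m * exp (E (Suc m))" using rho_nn[of m] by simp
      show ?thesis
        using e1 prodrho[of m] rhoE[of m] pr r2 M d0
        by (intro mult_mono mult_right_mono) (auto simp: mult_nonneg_nonneg)
    qed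
    also have "\<dots> = c0 * (1/4)^m"
    proof -
      have "(2::real)^m * 4^m = 8^m" by (simp flip: power_mult_distrib)
      thus ?thesis unfolding c0_def by (simp add: power_add field_simps power_divide)
    qed
    finally show ?thesis .
  qed
  define gam where "gam k = (\<Prod>j<k. B j) * (A k * 2^(k+2))" for k
  have sumb: "(\<Sum>k\<le>N. gam k) \<le> c0 * (4 * exp (E 0) + 4/3 - 4/3 * (1/4)^N)" for N
  proof (induction N)
    case 0 then show ?case using g0 unfolding gam_def by simp
  next
    case (Suc N)
    have "(\<Sum>k\<le>Suc N. gam k) = (\<Sum>k\<le>N. gam k) + gam (Suc N)" by simp
    also have "\<dots> \<le> c0 * (4 * exp (E 0) + 4/3 - 4/3 * (1/4)^N) + c0 * (1/4)^N"
      using Suc.IH gS[of N] unfolding gam_def by simp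
    also have "\<dots> = c0 * (4 * exp (E 0) + 4/3 - 4/3 * (1/4)^Suc N)" by (simp add: algebra_simps)
    finally show ?case .
  qed
  define R where "R = exp (wp*T/2) * (M * exp (wp * T) * norm x)"
  have rem: "(\<Prod>j\<le>N. B j) * f (Suc N) \<le> R * (1/8)^(Suc N)" for N
  proof -
    have "(\<Prod>j\<le>N. B j) = (\<Prod>j<Suc N. B j)" using lessThan_Suc_atMost by simp
    also have "\<dots> \<le> exp (wp * (T/2 - T/2^(Suc N+1))) * (\<Prod>j<Suc N. rho j)" by (rule prodB)
    also have "\<dots> \<le> exp (wp*T/2) * (1/8)^(Suc N)"
    proof (intro mult_mono)
      have "T/2 - T/2^(Suc N+1) \<le> T/2" using T by simp
      hence "wp * (T/2 - T/2^(Suc N+1)) \<le> wp * (T/2)" using wp0 by (rule mult_left_mono)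
      hence "wp * (T/2 - T/2^(Suc N+1)) \<le> wp * T/2" by simp
      thus "exp (wp * (T/2 - T/2^(Suc N+1))) \<le> exp (wp*T/2)" by simp
    qed (fact prodrho, simp, simp add: prod_nonneg rho_nn)
    finally have PB: "(\<Prod>j\<le>N. B j) \<le> exp (wp*T/2) * (1/8)^(Suc N)" .
    define tt where "tt = T/2^(Suc N)"
    have p1: "(1::real) \<le> 2^(Suc N)" by (rule one_le_power) simp
    have tt: "tt \<ge> 0" "tt \<le> T" unfolding tt_def using T divide_left_mono[OF p1, of T] by auto
    have "f (Suc N) \<le> norm (S tt) * norm x" unfolding f_def tt_def by (rule norm_blinfun)
    also have "\<dots> \<le> M * exp (\<omega> * tt) * norm x" using Sbound[OF tt(1)] by (intro mult_right_mono) auto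
    also have "\<dots> \<le> M * exp (wp * T) * norm x"
    proof -
      have "\<omega> * tt \<le> wp * tt" using tt unfolding wp_def by (intro mult_right_mono) auto
      also have "\<dots> \<le> wp * T" using tt wp0 by (intro mult_left_mono) auto
      finally show ?thesis using M by (intro mult_right_mono mult_left_mono) auto
    qed
    finally have fb: "f (Suc N) \<le> M * exp (wp * T) * norm x" .
    have f0: "f (Suc N) \<ge> 0" unfolding f_def by simp
    have "(\<Prod>j\<le>N. B j) * f (Suc N) \<le> (exp (wp*T/2) * (1/8)^(Suc N)) * (M * exp (wp * T) * norm x)"
      using PB fb f0 by (intro mult_mono) (auto simp: prod_nonneg Bnn)
    thus ?thesis unfolding R_def by (simp add: algebra_simps)
  qed
  have main: "f 0 \<le> c0 * (4 * exp (E 0) + 4/3) * \<Psi>"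
  proof -
    define K0 where "K0 = c0 * (4 * exp (E 0) + 4/3) * \<Psi>"
    have l0: "(\<lambda>N. (1/8::real)^N) \<longlonglongrightarrow> 0" by (rule LIMSEQ_realpow_zero) auto
    have l1: "(\<lambda>N. R * (1/8::real)^(Suc N)) \<longlonglongrightarrow> 0"
      using tendsto_mult[OF tendsto_const LIMSEQ_Suc[OF l0], of R] by simp
    have lim: "(\<lambda>N. K0 + R * (1/8)^(Suc N)) \<longlonglongrightarrow> K0"
      using tendsto_add[OF tendsto_const l1, of K0] by simp
    show ?thesis unfolding K0_def[symmetric]
    proof (rule LIMSEQ_le_const[OF lim])
      show "\<exists>N0. \<forall>N\<ge>N0. f 0 \<le> K0 + R * (1/8)^(Suc N)"
      proof (intro exI allI impI)
        fix N :: nat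
        have t1: "f 0 \<le> (\<Sum>k\<le>N. gam k) * \<Psi> + (\<Prod>j\<le>N. B j) * f (Suc N)"
          unfolding gam_def by (rule telescope[where al="\<lambda>k. A k * 2^(k+2)" and B=B and f=f, OF rec Bnn])
        have t2: "(\<Sum>k\<le>N. gam k) * \<Psi> \<le> c0 * (4 * exp (E 0) + 4/3) * \<Psi>"
        proof (rule mult_right_mono[OF _ Psi])
          show "(\<Sum>k\<le>N. gam k) \<le> c0 * (4 * exp (E 0) + 4/3)"
          proof -
            have "c0 * (4 * exp (E 0) + 4/3 - 4/3 * (1/4)^N) \<le> c0 * (4 * exp (E 0) + 4/3)"
              using c0 by (intro mult_left_mono) auto
            thus ?thesis using sumb[of N] by linarith
          qed
        qed
        show "f 0 \<le> K0 + R * (1/8)^(Suc N)" unfolding K0_def using t1 t2 rem[of N] by linarith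
      qed
    qed
  qed
  have f0: "f 0 = norm (S T x)" unfolding f_def by simp
  define Z where "Z = X * T powr (-b)"
  have Z0: "Z \<ge> 0" unfolding Z_def using Xpos by simp
  have E0e: "E 0 = max Z (max sig L)" unfolding E_def Z_def by simp
  have E0: "E 0 \<le> Z + max sig L" using Z0 sig L0 unfolding E0e by auto
  have eE0: "exp (E 0) \<le> exp Z * max (8*MK) (exp L)"
  proof -
    have "exp (E 0) \<le> exp (Z + max sig L)" using E0 by simp
    also have "\<dots> = exp Z * max (exp sig) (exp L)" by (simp add: exp_add max_def)
    also have "exp sig = 8 * MK" unfolding sig_def using MK1 by simp
    finally show ?thesis .
  qed
  define U where "U = 4 * d2 * M\<^sup>2 * (d0 * norm C + 1)"
  define p where "p = 8 / (exp 1 * ln (2::real))"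
  have U: "U = 4 * M * MK" unfolding U_def MK_def K_def by (simp add: power2_eq_square algebra_simps)
  have U4: "U \<ge> 4 * MK"
  proof -
    have "(4*MK)*1 \<le> (4*MK)*M" using M MK1 by (intro mult_left_mono) auto
    thus ?thesis unfolding U by (simp add: mult_ac)
  qed
  have p2: "p \<ge> 2"
  proof -
    have l2: "ln (2::real) \<le> 1" using ln_le_minus_one[of 2] by simp
    have l2p: "ln (2::real) > 0" by simp
    have "exp 1 * ln (2::real) \<le> 3 * 1" using exp_le l2 l2p by (intro mult_mono) auto
    moreover have "exp 1 * ln (2::real) > 0" using l2p by simp
    ultimately show ?thesis unfolding p_def by (simp add: field_simps)
  qed
  have Up: "U powr p \<ge> U^2"
  proof -
    have "U powr 2 \<le> U powr p" using p2 U4 MK1 by (intro powr_mono) auto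
    moreover have "U powr 2 = U^2" using powr_realpow[of U 2] U4 MK1 by simp
    ultimately show ?thesis by simp
  qed
  have mm: "max (8*MK) (exp L) + 1/3 \<le> max (U powr p) (exp (4*L))"
  proof (cases "exp L \<le> 8*MK")
    case True
    have "(4*MK)^2 \<le> U^2" using U4 MK1 by (intro power_mono) auto
    moreover have "8*MK + 1/3 \<le> (4*MK)^2"
    proof -
      have "MK * 1 \<le> MK * MK" using MK1 by (intro mult_left_mono) auto
      moreover have "(4*MK)^2 = 16 * (MK * MK)" by (simp add: power2_eq_square)
      ultimately show ?thesis using MK1 by linarith
    qed
    ultimately show ?thesis using True Up by (simp add: max_def)
  next
    case False
    have "exp L \<le> exp (3*L)" using L0 by simp
    hence "8 \<le> exp (3*L)" using False MK1 by linarith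
    hence "exp L * 8 \<le> exp L * exp (3*L)" by (intro mult_left_mono) auto
    also have "\<dots> = exp (4*L)" by (simp flip: exp_add)
    finally have "exp L + 1/3 \<le> exp (4*L)" using False MK1 by linarith
    thus ?thesis using False by (simp add: max_def)
  qed
  have key: "c0 * (4 * exp (E 0) + 4/3) \<le> ((4 * M * d0) * max (U powr p) (exp (4 * d1 * (2 * lamS) powr g1)))
      * exp (4 * X / T powr b + wp * (1 + 10 / (exp 1 * ln 2)) * T)"
  proof -
    have eZ: "exp Z \<ge> 1" using Z0 by simp
    have "4 * exp (E 0) + 4/3 \<le> 4 * (exp Z * max (8*MK) (exp L)) + 4/3" using eE0 by simp
    also have "\<dots> \<le> 4 * exp Z * (max (8*MK) (exp L) + 1/3)" using eZ by (simp add: algebra_simps)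
    also have "\<dots> \<le> 4 * exp Z * max (U powr p) (exp (4*L))" using mm eZ by (intro mult_left_mono) auto
    finally have A1: "4 * exp (E 0) + 4/3 \<le> 4 * exp Z * max (U powr p) (exp (4*L))" .
    have ZX: "Z \<le> 4 * X / T powr b"
    proof -
      have "Z = X / T powr b" unfolding Z_def by (simp add: powr_minus_divide)
      moreover have "X / T powr b \<le> 4 * X / T powr b" using Xpos T by (intro divide_right_mono) auto
      ultimately show ?thesis by simp
    qed
    have wT: "wp*T/2 \<le> wp * (1 + 10 / (exp 1 * ln 2)) * T"
    proof -
      have "0 \<le> 10 / (exp 1 * ln (2::real))" by simp
      hence "(wp * T) * (1/2) \<le> (wp * T) * (1 + 10 / (exp 1 * ln 2))" using wp0 T
        by (intro mult_left_mono) auto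
      hence "wp * T/2 \<le> wp * T * (1 + 10 / (exp 1 * ln 2))" by simp
      thus ?thesis by (simp add: algebra_simps)
    qed
    have eX: "exp (wp*T/2) * exp Z \<le> exp (4 * X / T powr b + wp * (1 + 10 / (exp 1 * ln 2)) * T)"
    proof -
      have "wp*T/2 + Z \<le> 4 * X / T powr b + wp * (1 + 10 / (exp 1 * ln 2)) * T" using ZX wT by linarith
      thus ?thesis by (simp add: mult_exp_exp)
    qed
    have L4: "4 * L = 4 * d1 * (2 * lamS) powr g1" unfolding L_def by simp
    have mpos: "max (U powr p) (exp (4*L)) \<ge> 0" by (simp add: le_max_iff_disj)
    have "c0 * (4 * exp (E 0) + 4/3) \<le> c0 * (4 * exp Z * max (U powr p) (exp (4*L)))"
      using A1 c0 by (intro mult_left_mono) auto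
    also have "\<dots> = ((4 * M * d0) * max (U powr p) (exp (4*L))) * (exp (wp*T/2) * exp Z)"
      unfolding c0_def by (simp add: algebra_simps)
    also have "\<dots> \<le> ((4 * M * d0) * max (U powr p) (exp (4*L))) * exp (4 * X / T powr b + wp * (1 + 10 / (exp 1 * ln 2)) * T)"
      using eX mpos M d0 by (intro mult_left_mono) auto
    finally show ?thesis unfolding L4 .
  qed
  have "norm (S T x) \<le> c0 * (4 * exp (E 0) + 4/3) * \<Psi>" using main f0 by simp
  also have "\<dots> \<le> ((4 * M * d0) * max (U powr p) (exp (4 * d1 * (2 * lamS) powr g1)))
      * exp (4 * X / T powr b + wp * (1 + 10 / (exp 1 * ln 2)) * T) * \<Psi>"
    using key Psi by (rule mult_right_mono)
  finally show ?thesis unfolding U_def p_def X_def b_def wp_def .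
qed

theorem theoremA1:
  fixes C :: "'a::banach \<Rightarrow>\<^sub>L 'b::banach"
    and S :: "real \<Rightarrow> ('a \<Rightarrow>\<^sub>L 'a)"
    and P :: "real \<Rightarrow> ('a \<Rightarrow>\<^sub>L 'a)"
    and M \<omega> lamS d0 d1 d2 d3 \<gamma>1 \<gamma>2 \<gamma>3 T :: real
  assumes S0: "S 0 = id_blinfun"
    and Sadd: "\<And>t s. t \<ge> 0 \<Longrightarrow> s \<ge> 0 \<Longrightarrow> S (t + s) = S t o\<^sub>L S s"
    and M: "M \<ge> 1"
    and Sbound: "\<And>t. t \<ge> 0 \<Longrightarrow> norm (S t) \<le> M * exp (\<omega> * t)"
    and meas: "\<And>x. (\<lambda>t. norm (C (S t x))) \<in> borel_measurable (lebesgue_on {0..})"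
    and lam: "lamS \<ge> 0"
    and pos: "d0 > 0" "d1 > 0" "d3 > 0" "\<gamma>1 > 0" "\<gamma>2 > 0" "\<gamma>3 > 0" "T > 0"
    and g12: "\<gamma>1 < \<gamma>2"
    and d2: "d2 \<ge> 1"
    and obs: "\<And>x l. l > lamS \<Longrightarrow>
               norm (P l x) \<le> d0 * exp (d1 * l powr \<gamma>1) * norm (C (P l x))"
    and diss: "\<And>x l t. l > lamS \<Longrightarrow> t \<in> {0<..T/2} \<Longrightarrow>
               norm (S t x - P l (S t x)) \<le> d2 * exp (- d3 * l powr \<gamma>2 * t powr \<gamma>3) * norm x"
  shows "let C1 = (4 * M * d0) * max ((4 * d2 * M\<^sup>2 * (d0 * norm C + 1)) powr (8 / (exp 1 * ln 2)))
                                      (exp (4 * d1 * (2 * lamS) powr \<gamma>1));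
             C2 = 4 * (2 powr \<gamma>1 * (2 * 4 powr \<gamma>3) powr (\<gamma>1 * \<gamma>2 / (\<gamma>2 - \<gamma>1))
                        * d1 powr \<gamma>2 / d3 powr \<gamma>1) powr (1 / (\<gamma>2 - \<gamma>1));
             C3 = max \<omega> 0 * (1 + 10 / (exp 1 * ln 2));
             E = exp (C2 / T powr (\<gamma>1 * \<gamma>3 / (\<gamma>2 - \<gamma>1)) + C3 * T)
         in (\<forall>r::real. r \<ge> 1 \<longrightarrow> (\<forall>x.
               norm (S T x) \<le> C1 / T powr (1 / r) * E
                 * (LINT t:{0..T}|lebesgue. norm (C (S t x)) powr r) powr (1 / r)))
          \<and> (\<forall>x. ereal (norm (S T x))
                 \<le> ereal (C1 * E) * esssup (lebesgue_on {0..T}) (\<lambda>t. ereal (norm (C (S t x)))))"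
proof -
  note T = pos(7)
  define C1 where "C1 = (4 * M * d0) * max ((4 * d2 * M\<^sup>2 * (d0 * norm C + 1)) powr (8 / (exp 1 * ln 2)))
                                      (exp (4 * d1 * (2 * lamS) powr \<gamma>1))"
  define EE where "EE = exp (4 * (2 powr \<gamma>1 * (2 * 4 powr \<gamma>3) powr (\<gamma>1 * \<gamma>2 / (\<gamma>2 - \<gamma>1))
                        * d1 powr \<gamma>2 / d3 powr \<gamma>1) powr (1 / (\<gamma>2 - \<gamma>1)) / T powr (\<gamma>1 * \<gamma>3 / (\<gamma>2 - \<gamma>1))
             + max \<omega> 0 * (1 + 10 / (exp 1 * ln 2)) * T)"
  have CORE: "norm (S T x) \<le> C1 * EE * Psi"
    if Psi: "Psi \<ge> 0" and H: "\<And>k c. (\<And>s. s \<in> {3*T/2^(k+2)..T/2^k} \<Longrightarrow> c \<le> norm (C (S s x))) \<Longrightarrow> c \<le> 2^(k+2) * Psi"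
    for x Psi
    unfolding C1_def EE_def
    by (rule core[OF Sadd M Sbound lam pos g12 d2 obs diss Psi H])
  have Ik: "{3*T/2^(k+2)..T/2^k} \<subseteq> {0..T}" for k :: nat
  proof
    fix s assume s: "s \<in> {3*T/2^(k+2)..T/2^k}"
    have "(1::real) \<le> 2^k" by (rule one_le_power) simp
    hence "T/2^k \<le> T" using T divide_left_mono[of 1 "2^k" T] by simp
    thus "s \<in> {0..T}" using s T by (auto intro: order_trans[rotated])
  qed
  have Ilen: "T/2^k - 3*T/2^(k+2) = T/2^(k+2)" for k :: nat by (simp add: power_add field_simps)
  have Ipos: "T/2^(k+2) > 0" for k :: nat using T by simp
  have C1pos: "C1 > 0" unfolding C1_def using M pos
    by (intro mult_pos_pos) (auto simp: less_max_iff_disj)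
  have part1: "norm (S T x) \<le> C1 / T powr (1 / r) * EE
                 * (LINT t:{0..T}|lebesgue. norm (C (S t x)) powr r) powr (1 / r)" if r: "r \<ge> 1" for r x
  proof -
    define g where "g t = norm (C (S t x))" for t
    define Ig where "Ig = (LINT t:{0..T}|lebesgue. g t powr r)"
    define Psi where "Psi = Ig powr (1/r) / T powr (1/r)"
    have Psi0: "Psi \<ge> 0" unfolding Psi_def by simp
    have gm: "g \<in> borel_measurable (lebesgue_on {0..T})"
      unfolding g_def by (rule measurable_restrict_mono[OF meas]) auto
    have gr: "(\<lambda>t. g t powr r) \<in> borel_measurable (lebesgue_on {0..T})" using gm by measurable
    define Bd where "Bd = norm C * (M * exp (\<bar>\<omega>\<bar> * T)) * norm x"
    have gb: "g t \<le> Bd" if t: "t \<in> {0..T}" for t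
    proof -
      have "g t \<le> norm C * norm (S t x)" unfolding g_def by (rule norm_blinfun)
      also have "norm (S t x) \<le> norm (S t) * norm x" by (rule norm_blinfun)
      also have "norm (S t) \<le> M * exp (\<bar>\<omega>\<bar> * T)"
      proof -
        have "\<omega> * t \<le> \<bar>\<omega>\<bar> * T" using t by (smt (verit) abs_ge_self atLeastAtMost_iff mult_mono abs_ge_zero mult_right_mono)
        hence "M * exp (\<omega> * t) \<le> M * exp (\<bar>\<omega>\<bar> * T)" using M by simp
        thus ?thesis using Sbound[of t] t by simp
      qed
      finally show ?thesis unfolding Bd_def by (simp add: mult_left_mono mult_right_mono mult.assoc)
    qed
    have intg: "integrable (lebesgue_on {0..T}) (\<lambda>t. g t powr r)"
    proof (rule finite_measure.integrable_const_bound[where B="Bd powr r"])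
      show "finite_measure (lebesgue_on {0..T})" by (rule finite_measure_lebesgue_on) simp
      show "AE t in lebesgue_on {0..T}. norm (g t powr r) \<le> Bd powr r"
      proof (rule AE_I2)
        fix t assume "t \<in> space (lebesgue_on {0..T})"
        hence "t \<in> {0..T}" by simp
        hence "g t \<le> Bd" by (rule gb)
        moreover have "g t \<ge> 0" unfolding g_def by simp
        ultimately show "norm (g t powr r) \<le> Bd powr r" using r by (simp add: powr_mono2)
      qed
    qed (rule gr)
    have intg2: "integrable lebesgue (\<lambda>t. indicator {0..T} t *\<^sub>R g t powr r)"
      using intg by (subst (asm) integrable_restrict_space) auto
    have IgE: "Ig = integral\<^sup>L lebesgue (\<lambda>t. indicator {0..T} t *\<^sub>R g t powr r)"
      unfolding Ig_def set_lebesgue_integral_def ..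
    have Ig0: "Ig \<ge> 0" unfolding IgE by (intro integral_nonneg_AE AE_I2) (simp add: indicator_def)
    have H: "c \<le> 2^(k+2) * Psi" if hc: "\<And>s. s \<in> {3*T/2^(k+2)..T/2^k} \<Longrightarrow> c \<le> g s" for k c
    proof (cases "c \<le> 0")
      case True thus ?thesis using Psi0 by (simp add: order_trans[OF True])
    next
      case False
      hence c: "c > 0" by simp
      define I where "I = {3*T/2^(k+2)..T/2^k}"
      define tau where "tau = T/2^(k+2)"
      have tau: "tau > 0" unfolding tau_def using T by simp
      have mI: "measure lebesgue I = tau" unfolding I_def tau_def using Ilen[of k] Ipos[of k] by simp
      have eI: "emeasure lebesgue I < \<infinity>"
      proof -
        have "3*T/2^(k+2) \<le> T/2^k" using Ilen[of k] Ipos[of k] by linarith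
        thus ?thesis unfolding I_def by simp
      qed
      have le: "indicator I t *\<^sub>R c powr r \<le> indicator {0..T} t *\<^sub>R g t powr r" for t
      proof (cases "t \<in> I")
        case True
        hence "t \<in> {0..T}" using Ik[of k] unfolding I_def by auto
        moreover have "c powr r \<le> g t powr r" using hc[of t] True c r unfolding I_def by (intro powr_mono2) auto
        ultimately show ?thesis using True by simp
      qed (simp add: indicator_def)
      have "integral\<^sup>L lebesgue (\<lambda>t. indicator I t *\<^sub>R c powr r) \<le> Ig"
        unfolding IgE using eI intg2 le by (intro integral_mono) (auto simp: I_def)
      moreover have "integral\<^sup>L lebesgue (\<lambda>t. indicator I t *\<^sub>R c powr r) = tau * c powr r"
      proof -
        have IS: "I \<in> sets lebesgue" unfolding I_def by simp
        have "integral\<^sup>L lebesgue (\<lambda>t. indicator I t *\<^sub>R c powr r) = measure lebesgue I *\<^sub>R c powr r"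
          using set_integral_const[OF IS, of "c powr r"] eI unfolding set_lebesgue_integral_def by simp
        thus ?thesis using mI by simp
      qed
      ultimately have "tau * c powr r \<le> Ig" by linarith
      hence "c powr r \<le> Ig / tau" using tau by (simp add: pos_le_divide_eq mult.commute)
      hence "(c powr r) powr (1/r) \<le> (Ig / tau) powr (1/r)" using c r by (intro powr_mono2) auto
      hence c1: "c \<le> Ig powr (1/r) / tau powr (1/r)" using c r tau Ig0 by (simp add: powr_powr powr_divide)
      have tr: "tau powr (1/r) = T powr (1/r) / (2^(k+2)) powr (1/r)" unfolding tau_def using T by (simp add: powr_divide)
      have p1: "(2^(k+2)::real) powr (1/r) \<le> 2^(k+2)"
      proof -
        have o: "(1::real) \<le> 2^(k+2)" by (rule one_le_power) simp
        have "(2^(k+2)::real) powr (1/r) \<le> (2^(k+2)) powr 1" using r o by (intro powr_mono) auto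
        thus ?thesis by simp
      qed
      have "Ig powr (1/r) / tau powr (1/r) = Ig powr (1/r) * (2^(k+2)) powr (1/r) / T powr (1/r)"
        unfolding tr by simp
      also have "\<dots> \<le> Ig powr (1/r) * 2^(k+2) / T powr (1/r)"
        using p1 T by (intro divide_right_mono mult_left_mono) auto
      also have "\<dots> = 2^(k+2) * Psi" unfolding Psi_def by simp
      finally show ?thesis using c1 by simp
    qed
    have "norm (S T x) \<le> C1 * EE * Psi" by (rule CORE[OF Psi0]) (use H g_def in auto)
    also have "\<dots> = C1 / T powr (1 / r) * EE * Ig powr (1 / r)" unfolding Psi_def by simp
    finally show ?thesis unfolding Ig_def g_def .
  qed
  have part2: "ereal (norm (S T x)) \<le> ereal (C1 * EE) * esssup (lebesgue_on {0..T}) (\<lambda>t. ereal (norm (C (S t x))))" for x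
  proof -
    define g where "g t = norm (C (S t x))" for t
    define es where "es = esssup (lebesgue_on {0..T}) (\<lambda>t. ereal (g t))"
    have sp: "space (lebesgue_on {0..T}) = {0..T}" by simp
    have Q: "ereal c \<le> es" if I: "I \<subseteq> {0..T}" "I \<in> sets lebesgue" "emeasure lebesgue I > 0"
      and hc: "\<And>s. s \<in> I \<Longrightarrow> c \<le> g s" for c I
    proof (rule ccontr)
      assume "\<not> ereal c \<le> es"
      hence ces: "es < ereal c" by simp
      have "AE t in lebesgue_on {0..T}. ereal (g t) \<le> es" unfolding es_def by (rule esssup_AE)
      then obtain N where N: "{t \<in> space (lebesgue_on {0..T}). \<not> ereal (g t) \<le> es} \<subseteq> N"
        "emeasure (lebesgue_on {0..T}) N = 0" "N \<in> sets (lebesgue_on {0..T})" by (rule AE_E)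
      have "I \<subseteq> N"
      proof
        fix t assume t: "t \<in> I"
        have "es < ereal (g t)" using ces hc[OF t] by (meson ereal_less_eq(3) order_less_le_trans)
        moreover have "t \<in> {0..T}" using t I(1) by auto
        ultimately have "t \<in> {t \<in> space (lebesgue_on {0..T}). \<not> ereal (g t) \<le> es}" using sp by (simp add: not_le)
        thus "t \<in> N" using N(1) by blast
      qed
      hence "emeasure (lebesgue_on {0..T}) I \<le> emeasure (lebesgue_on {0..T}) N" using N(3) by (rule emeasure_mono)
      moreover have "emeasure (lebesgue_on {0..T}) I = emeasure lebesgue I"
        using I(1) by (intro emeasure_restrict_space) auto
      ultimately show False using N(2) I(3) by simp
    qed
    have es0: "es \<ge> 0"
      using Q[of "{0..T}" 0] T unfolding g_def by (simp add: zero_ereal_def)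
    show ?thesis
    proof (cases "es = \<infinity>")
      case True
      thus ?thesis using C1pos unfolding es_def g_def EE_def by simp
    next
      case False
      define Psi where "Psi = real_of_ereal es"
      have esP: "es = ereal Psi" unfolding Psi_def using False es0 by (cases es) auto
      have Psi0: "Psi \<ge> 0" using es0 esP by simp
      have H: "c \<le> 2^(k+2) * Psi" if hc: "\<And>s. s \<in> {3*T/2^(k+2)..T/2^k} \<Longrightarrow> c \<le> norm (C (S s x))" for k c
      proof -
        have "emeasure lebesgue {3*T/2^(k+2)..T/2^k} = ennreal (T/2^(k+2))"
          using Ilen[of k] Ipos[of k] by simp
        hence "emeasure lebesgue {3*T/2^(k+2)..T/2^k} > 0" using Ipos[of k] by simp
        hence "ereal c \<le> es" using Q[OF Ik[of k]] hc unfolding g_def by simp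
        hence "c \<le> Psi" using esP by simp
        moreover have "Psi \<le> 2^(k+2) * Psi"
        proof -
          have "(1::real) \<le> 2^(k+2)" by (rule one_le_power) simp
          thus ?thesis using mult_right_mono[of 1 "2^(k+2)" Psi] Psi0 by simp
        qed
        ultimately show ?thesis by simp
      qed
      have "norm (S T x) \<le> C1 * EE * Psi" by (rule CORE[OF Psi0 H])
      thus ?thesis unfolding es_def[symmetric] g_def[symmetric] esP by simp
    qed
  qed
  show ?thesis unfolding Let_def C1_def[symmetric] EE_def[symmetric] using part1 part2 by blast
qed

end
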